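(* Let $P,\sigma_1^2,\sigma_2^2,\sigma_e^2>0$, let $h_1,h_2$ satisfy $0<|h_1|^2\le|h_2|^2$, set $\rho_1=P/\sigma_1^2$, $\rho_2=P/\sigma_2^2$, $\rho_e=P/\sigma_e^2$, and let $Q_1>0$ and $0<\varepsilon<1$. For $\phi_1,\phi_2\in(0,1]$ and $R_E\ge0$ define $$C_1=\log_2\Big(1+\frac{\phi_1\rho_1|h_1|^2}{\phi_2\rho_1|h_1|^2+1}\Big),\qquad R_2^s(\phi_2,R_E)=\big[\log_2(1+\phi_2\rho_2|h_2|^2)-R_E\big]^+,$$ with $[x]^+=\max(x,0)$, and the high-MER asymptotic secrecy outage probability $$P_{out}^{\infty}(R_E,\phi_2)=\begin{cases}\exp\!\Big(-\frac{2^{R_E}-1}{\rho_e(\phi_2-\phi_1(2^{R_E}-1))}\Big), & 2^{R_E}-1<\frac{\phi_2}{\phi_1},\\ 0, & 2^{R_E}-1\ge\frac{\phi_2}{\phi_1}.\end{cases}$$ Consider the problem $\max_{R_E,\phi_1,\phi_2}R_2^s(\phi_2,R_E)$ subject to $C_1\ge Q_1$, $P_{out}^{\infty}(R_E,\phi_2)\le\varepsilon$ and $\phi_1+\phi_2=1$ (the problem \textbf{P1} in the regime $\rho_1/\rho_e\to\infty$). Then the feasibility condition of this problem is $$P>\max\Big(\frac{2^{Q_1}-1}{|h_1|^2}\sigma_1^2,\ \frac{\sigma_2^2}{|h_2|^2}-\frac{\sigma_e^2}{\ln(1/\varepsilon)}\Big),$$ and under this condition the optimal power allocation and redundancy rate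 are $$\phi_2^*=\min\Big(\frac{1}{2^{Q_1}}+\frac{\sigma_1^2}{P|h_1|^22^{Q_1}}-\frac{\sigma_1^2}{P|h_1|^2},\ \frac12+\frac{\sigma_e^2}{2P\ln(1/\varepsilon)}-\frac{\sigma_2^2}{2P|h_2|^2}\Big),$$ $$\phi_1^*=1-\phi_2^*,\qquad R_E^*=\log_2\Big(1+\frac{\phi_2^*P\ln(1/\varepsilon)}{\sigma_e^2+\phi_1^*P\ln(1/\varepsilon)}\Big).$$
   Context: Two-user downlink NOMA with a passive eavesdropper: $\phi_k$ is the fraction of transmit power to user $k$, $C_1$ is the rate of the weak user 1 (required to be at least $Q_1$), $R_2^s$ is the secrecy rate of the strong user 2 with redundancy rate $R_E$, and $P^{\infty}_{out}$ is the limit of user 2's secrecy outage probability as the main-to-eavesdropper ratio $\rho_1/\rho_e=\sigma_e^2/\sigma_1^2\to\infty$; $\varepsilon$ is the maximum allowable secrecy outage probability. *)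

theory Defs
  imports Complex_Main
begin

definition pos_part :: "real \<Rightarrow> real" where
  "pos_part x = max x 0"

text \<open>Rate of the weak user 1; g1 = |h1|^2, rho1 = P/sigma1^2.\<close>
definition C1 :: "real \<Rightarrow> real \<Rightarrow> real \<Rightarrow> real \<Rightarrow> real" where
  "C1 rho1 g1 phi1 phi2 = log 2 (1 + phi1 * rho1 * g1 / (phi2 * rho1 * g1 + 1))"

text \<open>Secrecy rate of the strong user 2; g2 = |h2|^2, rho2 = P/sigma2^2.\<close>
definition R2s :: "real \<Rightarrow> real \<Rightarrow> real \<Rightarrow> real \<Rightarrow> real" where
  "R2s rho2 g2 phi2 RE = pos_part (log 2 (1 + phi2 * rho2 * g2) - RE)"

text \<open>High-MER asymptotic secrecy outage probability; rhoe = P/sigmae^2.\<close>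
definition Pout_inf :: "real \<Rightarrow> real \<Rightarrow> real \<Rightarrow> real \<Rightarrow> real" where
  "Pout_inf rhoe phi1 phi2 RE =
     (if 2 powr RE - 1 < phi2 / phi1
      then exp (- (2 powr RE - 1) / (rhoe * (phi2 - phi1 * (2 powr RE - 1))))
      else 0)"

definition P1_feasible ::
  "real \<Rightarrow> real \<Rightarrow> real \<Rightarrow> real \<Rightarrow> real \<Rightarrow> real \<Rightarrow> real \<Rightarrow> real \<Rightarrow> bool" where
  "P1_feasible rho1 g1 rhoe Q1 eps RE phi1 phi2 \<longleftrightarrow>
     RE \<ge> 0 \<and> 0 < phi1 \<and> phi1 \<le> 1 \<and> 0 < phi2 \<and> phi2 \<le> 1 \<and>
     C1 rho1 g1 phi1 phi2 \<ge> Q1 \<and> Pout_inf rhoe phi1 phi2 RE \<le> eps \<and> phi1 + phi2 = 1"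

end

theory Submission
  imports Defs
begin

lemma pout_iff:
  fixes r e p1 p2 RE :: real
  assumes r: "r > 0" and e: "0 < e" "e < 1" and p: "p1 > 0" "p2 > 0" and RE: "RE \<ge> 0"
  shows "Pout_inf r p1 p2 RE \<le> e \<longleftrightarrow> (2 powr RE - 1) * (1 + r * ln (1/e) * p1) \<ge> r * ln (1/e) * p2"
proof -
  define x where "x = 2 powr RE - 1"
  define L where "L = ln (1/e)"
  have x0: "x \<ge> 0" unfolding x_def using RE by (simp add: ge_one_powr_ge_zero)
  have L0: "L > 0" unfolding L_def using e by simp
  have lne: "ln e = - L" unfolding L_def using e by (simp add: ln_div)
  show ?thesis
  proof (cases "x < p2 / p1")
    case True
    define d where "d = p2 - p1 * x"
    have d0: "d > 0" using True p unfolding d_def by (simp add: field_simps)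
    have eq: "Pout_inf r p1 p2 RE = exp (- x / (r * d))"
      unfolding Pout_inf_def x_def[symmetric] d_def using True by simp
    have "exp (- x / (r * d)) \<le> e \<longleftrightarrow> exp (- x / (r * d)) \<le> exp (ln e)" using e by simp
    also have "\<dots> \<longleftrightarrow> - x / (r*d) \<le> - L" using lne by simp
    also have "\<dots> \<longleftrightarrow> L \<le> x / (r*d)" by linarith
    also have "\<dots> \<longleftrightarrow> L * (r*d) \<le> x" using r d0 by (simp add: pos_le_divide_eq)
    also have "\<dots> \<longleftrightarrow> x * (1 + r * L * p1) \<ge> r * L * p2" unfolding d_def
      by (simp add: algebra_simps)
    finally show ?thesis unfolding eq x_def L_def .
  next
    case False
    hence "x * p1 \<ge> p2" using p by (simp add: field_simps)
    hence "r * L * p2 \<le> r * L * (x * p1)" using r L0 by simp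
    also have "\<dots> \<le> x * (1 + r * L * p1)" using x0 by (simp add: algebra_simps)
    finally have "x * (1 + r * L * p1) \<ge> r * L * p2" .
    moreover have "Pout_inf r p1 p2 RE = 0" unfolding Pout_inf_def x_def[symmetric] using False by simp
    ultimately show ?thesis using e unfolding x_def L_def by simp
  qed
qed

lemma C1_iff:
  fixes rho g p1 p2 Q :: real
  assumes "rho > 0" "g > 0" "p1 \<ge> 0" "p2 \<ge> 0" "p1 + p2 = 1"
  shows "C1 rho g p1 p2 \<ge> Q \<longleftrightarrow> 2 powr Q * (p2 * rho * g + 1) \<le> rho * g + 1"
proof -
  have "p2 * rho * g \<ge> 0" using assms by simp
  hence den: "p2 * rho * g + 1 > 0" by linarith
  have y: "1 + p1 * rho * g / (p2 * rho * g + 1) = (rho * g + 1) / (p2 * rho * g + 1)"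
  proof -
    have p1e: "p1 = 1 - p2" using assms(5) by simp
    show ?thesis unfolding p1e using den by (simp add: field_simps)
  qed
  have "rho * g > 0" using assms by simp
  hence yp: "(rho * g + 1) / (p2 * rho * g + 1) > 0" using den by simp
  show ?thesis unfolding C1_def y using le_log_iff[of 2 _ Q, OF _ yp] den
    by (simp add: pos_le_divide_eq)
qed

lemma one_plus_pos: "(0::real) \<le> x \<Longrightarrow> 0 \<le> y \<Longrightarrow> 0 < 1 + x*y"
proof -
  assume "0 \<le> x" "0 \<le> y"
  hence "0 \<le> x*y" by simp
  thus ?thesis by linarith
qed

lemma pos_part_mono: "x \<le> y \<Longrightarrow> pos_part x \<le> pos_part y"
  unfolding pos_part_def by simp

theorem theorem2:
  fixes P s1 s2 se Q1 eps :: real and h1 h2 :: complex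
  assumes "P > 0" "s1 > 0" "s2 > 0" "se > 0"
    and "0 < (cmod h1)\<^sup>2" "(cmod h1)\<^sup>2 \<le> (cmod h2)\<^sup>2"
    and "Q1 > 0" "0 < eps" "eps < 1"
  defines "g1 \<equiv> (cmod h1)\<^sup>2" and "g2 \<equiv> (cmod h2)\<^sup>2"
    and "rho1 \<equiv> P / s1" and "rho2 \<equiv> P / s2" and "rhoe \<equiv> P / se"
    and "L \<equiv> ln (1 / eps)"
    and "phi2s \<equiv> min (1 / 2 powr Q1 + s1 / (P * (cmod h1)\<^sup>2 * 2 powr Q1) - s1 / (P * (cmod h1)\<^sup>2))
                       (1/2 + se / (2 * P * ln (1 / eps)) - s2 / (2 * P * (cmod h2)\<^sup>2))"
    and "phi1s \<equiv> 1 - min (1 / 2 powr Q1 + s1 / (P * (cmod h1)\<^sup>2 * 2 powr Q1) - s1 / (P * (cmod h1)\<^sup>2))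
                       (1/2 + se / (2 * P * ln (1 / eps)) - s2 / (2 * P * (cmod h2)\<^sup>2))"
  shows "((\<exists>RE phi1 phi2. P1_feasible rho1 g1 rhoe Q1 eps RE phi1 phi2
                          \<and> R2s rho2 g2 phi2 RE > 0)
            \<longleftrightarrow> P > max ((2 powr Q1 - 1) / g1 * s1) (s2 / g2 - se / L))
       \<and> (P > max ((2 powr Q1 - 1) / g1 * s1) (s2 / g2 - se / L) \<longrightarrow>
            P1_feasible rho1 g1 rhoe Q1 eps
              (log 2 (1 + phi2s * P * L / (se + phi1s * P * L))) phi1s phi2s \<and>
            (\<forall>RE phi1 phi2. P1_feasible rho1 g1 rhoe Q1 eps RE phi1 phi2 \<longrightarrow>
                R2s rho2 g2 phi2 RE \<le> R2s rho2 g2 phi2s (log 2 (1 + phi2s * P * L / (se + phi1s * P * L)))))"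
proof -
  have Pp: "P > 0" and s1p: "s1 > 0" and s2p: "s2 > 0" and sep: "se > 0" using assms by auto
  have g1p: "g1 > 0" using assms(5) g1_def by simp
  have g2p: "g2 > 0" using assms(5,6) unfolding g1_def g2_def by linarith
  have Lp: "L > 0" using assms(8,9) L_def by simp
  define c where "c = rho1 * g1"
  define a where "a = rho2 * g2"
  define b where "b = rhoe * L"
  have cp: "c > 0" unfolding c_def rho1_def using Pp s1p g1p by simp
  have ap: "a > 0" unfolding a_def rho2_def using Pp s2p g2p by simp
  have bp: "b > 0" unfolding b_def rhoe_def using Pp sep Lp by simp
  define A where "A = 1 / 2 powr Q1 + s1 / (P * g1 * 2 powr Q1) - s1 / (P * g1)"
  define B where "B = 1/2 + se / (2 * P * L) - s2 / (2 * P * g2)"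
  have phi2s_eq: "phi2s = min A B" unfolding phi2s_def A_def B_def g1_def g2_def L_def by simp
  have phi1s_eq: "phi1s = 1 - phi2s" unfolding phi1s_def phi2s_def by simp
  have "2 powr 0 < 2 powr Q1" using assms(7) by simp
  hence q: "2 powr Q1 > 1" by simp
  have A_eq: "A = (c + 1 - 2 powr Q1) / (2 powr Q1 * c)"
    unfolding A_def c_def rho1_def using Pp s1p g1p by (simp add: field_simps)
  have A_iff: "2 powr Q1 * (p * c + 1) \<le> c + 1 \<longleftrightarrow> p \<le> A" for p
  proof -
    have "p \<le> A \<longleftrightarrow> p * (2 powr Q1 * c) \<le> c + 1 - 2 powr Q1"
      unfolding A_eq using cp q by (simp add: pos_le_divide_eq)
    thus ?thesis by (simp add: algebra_simps)
  qed
  have A1: "A < 1"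
  proof -
    have "2 powr Q1 * (1 * c + 1) > c + 1" using q cp by simp
    thus ?thesis using A_iff[of 1] by linarith
  qed
  have B_eq: "B = 1/2 + 1/(2*b) - 1/(2*a)"
    unfolding B_def a_def b_def rho2_def rhoe_def using Pp s2p sep g2p Lp by (simp add: field_simps)
  have f_id: "(1 + a*p)*(1 + b*(1-p)) - (1+b) = a*b*p*(2*B - p)" for p
    unfolding B_eq using ap bp by (simp add: field_simps)
  have pout: "Pout_inf rhoe p1 p2 RE \<le> eps \<longleftrightarrow> log 2 ((1+b)/(1+b*p1)) \<le> RE"
    if "RE \<ge> 0" "p1 > 0" "p2 > 0" "p1 + p2 = 1" for RE p1 p2
  proof -
    have rp: "rhoe > 0" unfolding rhoe_def using Pp sep by simp
    have d: "1 + b*p1 > 0" using bp that by (intro one_plus_pos) auto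
    have z: "(1+b)/(1+b*p1) > 0" using d bp by simp
    have "Pout_inf rhoe p1 p2 RE \<le> eps \<longleftrightarrow> (2 powr RE - 1) * (1 + b * p1) \<ge> b * p2"
      using pout_iff[OF rp assms(8,9) that(2,3,1)] unfolding b_def L_def by simp
    also have "\<dots> \<longleftrightarrow> 2 powr RE * (1 + b*p1) \<ge> 1 + b"
    proof -
      have "1 + b = 1 + b*p1 + b*p2" using that(4) by (simp add: algebra_simps flip: distrib_left)
      thus ?thesis by (simp add: algebra_simps)
    qed
    also have "\<dots> \<longleftrightarrow> (1+b)/(1+b*p1) \<le> 2 powr RE" using d by (simp add: pos_divide_le_eq)
    also have "\<dots> \<longleftrightarrow> log 2 ((1+b)/(1+b*p1)) \<le> RE" using log_le_iff[of 2, OF _ z] by simp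
    finally show ?thesis .
  qed
  have feas: "P1_feasible rho1 g1 rhoe Q1 eps RE p1 p2 \<longleftrightarrow>
     (RE \<ge> 0 \<and> 0 < p2 \<and> p2 \<le> A \<and> p1 = 1 - p2 \<and> log 2 ((1+b)/(1+b*p1)) \<le> RE)" for RE p1 p2
  proof
    assume H: "P1_feasible rho1 g1 rhoe Q1 eps RE p1 p2"
    hence h: "RE \<ge> 0" "0 < p1" "p1 \<le> 1" "0 < p2" "p2 \<le> 1" "C1 rho1 g1 p1 p2 \<ge> Q1"
      "Pout_inf rhoe p1 p2 RE \<le> eps" "p1 + p2 = 1" unfolding P1_feasible_def by auto
    have r1: "rho1 > 0" unfolding rho1_def using Pp s1p by simp
    have "2 powr Q1 * (p2 * rho1 * g1 + 1) \<le> rho1 * g1 + 1"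
      using C1_iff[OF r1 g1p _ _ h(8)] h by simp
    hence "p2 \<le> A" using A_iff[of p2] unfolding c_def by (simp add: mult.assoc)
    thus "RE \<ge> 0 \<and> 0 < p2 \<and> p2 \<le> A \<and> p1 = 1 - p2 \<and> log 2 ((1+b)/(1+b*p1)) \<le> RE"
      using h pout[of RE p1 p2] by auto
  next
    assume h: "RE \<ge> 0 \<and> 0 < p2 \<and> p2 \<le> A \<and> p1 = 1 - p2 \<and> log 2 ((1+b)/(1+b*p1)) \<le> RE"
    have r1: "rho1 > 0" unfolding rho1_def using Pp s1p by simp
    have p1p: "p1 > 0" using h A1 by simp
    have "2 powr Q1 * (p2 * c + 1) \<le> c + 1" using A_iff h by simp
    hence "C1 rho1 g1 p1 p2 \<ge> Q1" using C1_iff[OF r1 g1p, of p1 p2 Q1] h p1p unfolding c_def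
      by (simp add: mult.assoc)
    moreover have "Pout_inf rhoe p1 p2 RE \<le> eps" using pout[of RE p1 p2] h p1p by auto
    ultimately show "P1_feasible rho1 g1 rhoe Q1 eps RE p1 p2"
      unfolding P1_feasible_def using h p1p A1 by auto
  qed
  have R2s_eq: "R2s rho2 g2 p RE = pos_part (log 2 (1 + a*p) - RE)" for p RE
    unfolding R2s_def a_def by (simp add: mult.assoc mult.commute mult.left_commute)
  have key: "log 2 (1 + a*p2) - RE \<le> log 2 ((1 + a*p2)*(1 + b*(1-p2))) - log 2 (1+b)"
    if "P1_feasible rho1 g1 rhoe Q1 eps RE p1 p2" for RE p1 p2
  proof -
    have h: "RE \<ge> 0" "0 < p2" "p2 \<le> A" "p1 = 1 - p2" "log 2 ((1+b)/(1+b*p1)) \<le> RE"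
      using that feas by auto
    have d: "1 + b*p1 > 0" using bp h A1 by (intro one_plus_pos) auto
    have "1 + a*p2 > 0" using ap h by (intro one_plus_pos) auto
    hence "log 2 ((1 + a*p2)*(1 + b*(1-p2))) = log 2 (1 + a*p2) + log 2 (1 + b*p1)"
      using d h by (simp add: log_mult_pos)
    moreover have "log 2 ((1+b)/(1+b*p1)) = log 2 (1+b) - log 2 (1+b*p1)"
      using d bp by (simp add: log_divide_pos)
    ultimately show ?thesis using h by linarith
  qed
  have cond_iff: "P > max ((2 powr Q1 - 1) / g1 * s1) (s2 / g2 - se / L) \<longleftrightarrow> A > 0 \<and> B > 0"
  proof -
    have "2 powr Q1 * c > 0" using cp q by simp
    hence "A > 0 \<longleftrightarrow> c + 1 - 2 powr Q1 > 0" unfolding A_eq by (simp add: zero_less_divide_iff)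
    also have "\<dots> \<longleftrightarrow> (2 powr Q1 - 1) / g1 * s1 < P"
      unfolding c_def rho1_def using g1p s1p Pp by (simp add: field_simps)
    finally have 1: "A > 0 \<longleftrightarrow> (2 powr Q1 - 1) / g1 * s1 < P" .
    have "2*P*B = P + se/L - s2/g2" unfolding B_def using Pp Lp g2p by (simp add: field_simps)
    hence 2: "B > 0 \<longleftrightarrow> s2 / g2 - se / L < P" using Pp
      by (smt (verit) mult_pos_pos zero_less_mult_iff)
    show ?thesis using 1 2 by simp
  qed
  define REs where "REs = log 2 (1 + phi2s * P * L / (se + phi1s * P * L))"
  have main: "P1_feasible rho1 g1 rhoe Q1 eps REs phi1s phi2s \<and>
     R2s rho2 g2 phi2s REs = pos_part (log 2 ((1 + a*phi2s)*(1 + b*(1-phi2s))) - log 2 (1+b)) \<and>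
     R2s rho2 g2 phi2s REs > 0"
    if AB: "A > 0" "B > 0"
  proof -
    have p2p: "phi2s > 0" "phi2s \<le> A" "phi2s < 2*B" "phi2s < 1" using AB A1 phi2s_eq by auto
    have p1: "phi1s > 0" "phi1s \<le> 1" using p2p phi1s_eq by auto
    have d: "1 + b*phi1s > 0" using bp p1 by (intro one_plus_pos) auto
    have "phi1s * P * L > 0" using p1 Pp Lp by simp
    hence d2: "se + phi1s * P * L > 0" using sep by linarith
    have REs_eq: "REs = log 2 ((1+b)/(1+b*phi1s))"
    proof -
      have b_eq: "b = P*L/se" unfolding b_def rhoe_def by simp
      have n1: "1+b = (se+P*L)/se" unfolding b_eq using sep by (simp add: field_simps)
      have n2: "1+b*phi1s = (se+phi1s*P*L)/se" unfolding b_eq using sep by (simp add: field_simps)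
      have e1: "(1+b)/(1+b*phi1s) = (se+P*L)/(se+phi1s*P*L)" unfolding n1 n2 using sep by simp
      have "se + phi1s * P * L + phi2s * P * L = se + P*L" unfolding phi1s_eq by (simp add: algebra_simps)
      moreover have "1 + phi2s * P * L / (se + phi1s * P * L) = (se + phi1s * P * L + phi2s * P * L) / (se + phi1s * P * L)"
        using d2 by (simp add: add_divide_distrib)
      ultimately have "1 + phi2s * P * L / (se + phi1s * P * L) = (1+b)/(1+b*phi1s)" unfolding e1 by simp
      thus ?thesis unfolding REs_def by simp
    qed
    have ge1: "(1+b)/(1+b*phi1s) \<ge> 1" using d bp p1 by (simp add: mult_left_le)
    hence "REs \<ge> 0" unfolding REs_eq by simp
    hence F: "P1_feasible rho1 g1 rhoe Q1 eps REs phi1s phi2s" using feas p2p phi1s_eq REs_eq by simp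
    have "1 + a*phi2s > 0" using ap p2p by (intro one_plus_pos) auto
    hence "log 2 ((1 + a*phi2s)*(1 + b*(1-phi2s))) = log 2 (1 + a*phi2s) + log 2 (1 + b*phi1s)"
      using d phi1s_eq by (simp add: log_mult_pos)
    moreover have "log 2 ((1+b)/(1+b*phi1s)) = log 2 (1+b) - log 2 (1+b*phi1s)"
      using d bp by (simp add: log_divide_pos)
    ultimately have "log 2 (1 + a*phi2s) - log 2 ((1+b)/(1+b*phi1s)) = log 2 ((1 + a*phi2s)*(1 + b*(1-phi2s))) - log 2 (1+b)"
      by linarith
    hence E: "R2s rho2 g2 phi2s REs = pos_part (log 2 ((1 + a*phi2s)*(1 + b*(1-phi2s))) - log 2 (1+b))"
      unfolding R2s_eq REs_eq by simp
    have "a*b*phi2s*(2*B - phi2s) > 0" using ap bp p2p by simp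
    hence "(1 + a*phi2s)*(1 + b*(1-phi2s)) > 1 + b" using f_id[of phi2s] by linarith
    hence "log 2 ((1 + a*phi2s)*(1 + b*(1-phi2s))) > log 2 (1+b)" using bp by simp
    hence "R2s rho2 g2 phi2s REs > 0" unfolding E pos_part_def by simp
    thus ?thesis using F E by simp
  qed
  show ?thesis
  proof (intro conjI impI allI)
    show "(\<exists>RE phi1 phi2. P1_feasible rho1 g1 rhoe Q1 eps RE phi1 phi2 \<and> R2s rho2 g2 phi2 RE > 0)
       \<longleftrightarrow> P > max ((2 powr Q1 - 1) / g1 * s1) (s2 / g2 - se / L)"
    proof
      assume "\<exists>RE phi1 phi2. P1_feasible rho1 g1 rhoe Q1 eps RE phi1 phi2 \<and> R2s rho2 g2 phi2 RE > 0"
      then obtain RE p1 p2 where F: "P1_feasible rho1 g1 rhoe Q1 eps RE p1 p2" and R: "R2s rho2 g2 p2 RE > 0"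
        by blast
      have h: "RE \<ge> 0" "0 < p2" "p2 \<le> A" "p1 = 1 - p2" using F feas by auto
      have "log 2 (1 + a*p2) - RE > 0" using R unfolding R2s_eq pos_part_def by (simp split: if_splits)
      hence "log 2 ((1 + a*p2)*(1 + b*(1-p2))) > log 2 (1+b)" using key[OF F] by linarith
      moreover have "1 + b > 0" using bp by simp
      moreover have "(1 + a*p2)*(1 + b*(1-p2)) > 0"
      proof -
        have "1 + a*p2 > 0" "1 + b*(1-p2) > 0" using ap bp h A1 by (auto intro!: one_plus_pos)
        thus ?thesis by simp
      qed
      ultimately have "(1 + a*p2)*(1 + b*(1-p2)) > 1 + b" by simp
      hence "a*b*p2*(2*B - p2) > 0" using f_id[of p2] by linarith
      moreover have "a*b*p2 > 0" using ap bp h by simp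
      ultimately have "2*B - p2 > 0" by (simp add: zero_less_mult_iff)
      hence "B > 0" using h by simp
      thus "P > max ((2 powr Q1 - 1) / g1 * s1) (s2 / g2 - se / L)" using cond_iff h by simp
    next
      assume "P > max ((2 powr Q1 - 1) / g1 * s1) (s2 / g2 - se / L)"
      hence AB: "A > 0" "B > 0" using cond_iff by auto
      thus "\<exists>RE phi1 phi2. P1_feasible rho1 g1 rhoe Q1 eps RE phi1 phi2 \<and> R2s rho2 g2 phi2 RE > 0"
        using main by blast
    qed
  next
    assume "P > max ((2 powr Q1 - 1) / g1 * s1) (s2 / g2 - se / L)"
    hence AB: "A > 0" "B > 0" using cond_iff by auto
    show "P1_feasible rho1 g1 rhoe Q1 eps (log 2 (1 + phi2s * P * L / (se + phi1s * P * L))) phi1s phi2s"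
      using main[OF AB] unfolding REs_def by simp
  next
    fix RE p1 p2
    assume "P > max ((2 powr Q1 - 1) / g1 * s1) (s2 / g2 - se / L)"
    hence AB: "A > 0" "B > 0" using cond_iff by auto
    assume F: "P1_feasible rho1 g1 rhoe Q1 eps RE p1 p2"
    show "R2s rho2 g2 p2 RE \<le> R2s rho2 g2 phi2s (log 2 (1 + phi2s * P * L / (se + phi1s * P * L)))"
    proof -
      have h: "RE \<ge> 0" "0 < p2" "p2 \<le> A" "p1 = 1 - p2" using F feas by auto
      have pos: "(1 + a*p2)*(1 + b*(1-p2)) > 0"
      proof -
        have "1 + a*p2 > 0" "1 + b*(1-p2) > 0" using ap bp h A1 by (auto intro!: one_plus_pos)
        thus ?thesis by simp
      qed
      have alg: "(1 + a*phi2s)*(1 + b*(1-phi2s)) - (1 + a*p2)*(1 + b*(1-p2))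
          = a*b*((phi2s - p2)*(2*B - phi2s - p2))"
        using f_id[of phi2s] f_id[of p2] by (simp add: algebra_simps)
      have "(phi2s - p2)*(2*B - phi2s - p2) \<ge> 0"
      proof (cases "A \<le> B")
        case True
        hence "phi2s = A" using phi2s_eq by simp
        thus ?thesis using h True by simp
      next
        case False
        hence "phi2s = B" using phi2s_eq by simp
        hence "(phi2s - p2)*(2*B - phi2s - p2) = (B - p2)^2" by (simp add: power2_eq_square)
        thus ?thesis by simp
      qed
      hence "a*b*((phi2s - p2)*(2*B - phi2s - p2)) \<ge> 0" using ap bp by simp
      hence "(1 + a*p2)*(1 + b*(1-p2)) \<le> (1 + a*phi2s)*(1 + b*(1-phi2s))" using alg by linarith
      hence "log 2 ((1 + a*p2)*(1 + b*(1-p2))) \<le> log 2 ((1 + a*phi2s)*(1 + b*(1-phi2s)))"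
        using pos by simp
      hence "log 2 (1 + a*p2) - RE \<le> log 2 ((1 + a*phi2s)*(1 + b*(1-phi2s))) - log 2 (1+b)"
        using key[OF F] by linarith
      hence "R2s rho2 g2 p2 RE \<le> R2s rho2 g2 phi2s REs"
        using main[OF AB] unfolding R2s_eq[of p2] by (simp add: pos_part_mono)
      thus "R2s rho2 g2 p2 RE \<le> R2s rho2 g2 phi2s (log 2 (1 + phi2s * P * L / (se + phi1s * P * L)))"
        unfolding REs_def .
    qed
  qed
qed

end
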